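(* Let $2<q<\frac{10}{3}$ and $J(u)=\frac12\int_{\mathbb{R}^2}(|u_x|^2+|D_x^{-1}u_y|^2)\,dx\,dy-\frac1q\int_{\mathbb{R}^2}|u|^q\,dx\,dy$. For every $a>0$, the functional $J$ is bounded from below and coercive on $S(a)$.
   Context: For $h:\mathbb{R}^2\to\mathbb{R}$ let $D_x^{-1}h(x,y)=\int_{-\infty}^x h(s,y)\,ds$. Let $Y=\{g_x: g\in C_0^\infty(\mathbb{R}^2)\}$ with inner product $\langle u,v\rangle_X=\int_{\mathbb{R}^2}(u_xv_x+D_x^{-1}u_y\,D_x^{-1}v_y+uv)\,dx\,dy$ and induced norm $\|\cdot\|$. The space $X$ consists of all $u:\mathbb{R}^2\to\mathbb{R}$ for which there is a sequence $(u_n)\subset Y$ with $u_n\to u$ a.e. and $\|u_j-u_k\|\to0$ as $j,k\to\infty$; it is a Hilbert space. For $a>0$, $S(a)=\{u\in X:\int_{\mathbb{R}^2}u^2=a^2\}$. *)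

theory Defs
  imports "HOL-Analysis.Analysis"
begin

definition px :: "(real \<times> real \<Rightarrow> real) \<Rightarrow> real \<times> real \<Rightarrow> real" where
  "px f = (\<lambda>(x, y). deriv (\<lambda>s. f (s, y)) x)"

definition py :: "(real \<times> real \<Rightarrow> real) \<Rightarrow> real \<times> real \<Rightarrow> real" where
  "py f = (\<lambda>(x, y). deriv (\<lambda>t. f (x, t)) y)"

fun pderivs :: "bool list \<Rightarrow> (real \<times> real \<Rightarrow> real) \<Rightarrow> real \<times> real \<Rightarrow> real" where
  "pderivs [] f = f"
| "pderivs (True # ds) f = px (pderivs ds f)"
| "pderivs (False # ds) f = py (pderivs ds f)"

definition smooth2 :: "(real \<times> real \<Rightarrow> real) \<Rightarrow> bool" where
  "smooth2 f \<longleftrightarrow> (\<forall>ds. continuous_on UNIV (pderivs ds f) \<and>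
      (\<forall>x y. (\<lambda>s. pderivs ds f (s, y)) differentiable (at x) \<and>
             (\<lambda>t. pderivs ds f (x, t)) differentiable (at y)))"

definition C0inf :: "(real \<times> real \<Rightarrow> real) set" where
  "C0inf = {g. smooth2 g \<and> compact (closure {z. g z \<noteq> 0})}"

definition Dxinv :: "(real \<times> real \<Rightarrow> real) \<Rightarrow> real \<times> real \<Rightarrow> real" where
  "Dxinv h = (\<lambda>(x, y). set_lebesgue_integral lborel {..x} (\<lambda>s. h (s, y)))"

definition Yspace :: "(real \<times> real \<Rightarrow> real) set" where
  "Yspace = {px g | g. g \<in> C0inf}"

definition Ykin :: "(real \<times> real \<Rightarrow> real) \<Rightarrow> real" where
  "Ykin u = integral\<^sup>L lborel (\<lambda>z. (px u z)\<^sup>2 + (Dxinv (py u) z)\<^sup>2)"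

definition L2sq :: "(real \<times> real \<Rightarrow> real) \<Rightarrow> real" where
  "L2sq u = integral\<^sup>L lborel (\<lambda>z. (u z)\<^sup>2)"

definition Ynorm2 :: "(real \<times> real \<Rightarrow> real) \<Rightarrow> real" where
  "Ynorm2 u = Ykin u + L2sq u"

definition approx_seq :: "(real \<times> real \<Rightarrow> real) \<Rightarrow> (nat \<Rightarrow> real \<times> real \<Rightarrow> real) \<Rightarrow> bool" where
  "approx_seq u s \<longleftrightarrow> (\<forall>n. s n \<in> Yspace) \<and>
     (AE z in lborel. (\<lambda>n. s n z) \<longlonglongrightarrow> u z) \<and>
     (\<forall>e>0. \<exists>N. \<forall>j\<ge>N. \<forall>k\<ge>N. Ynorm2 (\<lambda>z. s j z - s k z) < e)"

definition Xspace :: "(real \<times> real \<Rightarrow> real) set" where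
  "Xspace = {u. \<exists>s. approx_seq u s}"

text \<open>Extension of the gradient part to X, as the limit along an approximating sequence
  (independent of the chosen sequence).\<close>
definition Xkin :: "(real \<times> real \<Rightarrow> real) \<Rightarrow> real" where
  "Xkin u = lim (\<lambda>n. Ykin ((SOME s. approx_seq u s) n))"

definition Xnorm :: "(real \<times> real \<Rightarrow> real) \<Rightarrow> real" where
  "Xnorm u = sqrt (Xkin u + L2sq u)"

definition Ssphere :: "real \<Rightarrow> (real \<times> real \<Rightarrow> real) set" where
  "Ssphere a = {u \<in> Xspace. L2sq u = a\<^sup>2}"

definition Jfun :: "real \<Rightarrow> (real \<times> real \<Rightarrow> real) \<Rightarrow> real" where
  "Jfun q u = Xkin u / 2 - (1 / q) * integral\<^sup>L lborel (\<lambda>z. \<bar>u z\<bar> powr q)"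

end

theory Submission
  imports Defs
begin

definition supp_in :: "(real \<times> real \<Rightarrow> real) \<Rightarrow> real \<Rightarrow> bool" where
  "supp_in f r \<longleftrightarrow> (\<forall>x y. f (x, y) \<noteq> 0 \<longrightarrow> \<bar>x\<bar> \<le> r \<and> \<bar>y\<bar> \<le> r)"

lemma supp_in_mono: "supp_in f r \<Longrightarrow> r \<le> r' \<Longrightarrow> supp_in f r'"
  unfolding supp_in_def by (meson order_trans)

lemma C0inf_supp: assumes "g \<in> C0inf" shows "\<exists>r. supp_in g r"
proof -
  have "compact (closure {z. g z \<noteq> 0})" using assms unfolding C0inf_def by blast
  hence "bounded (closure {z. g z \<noteq> 0})" by (rule compact_imp_bounded)
  then obtain B where B: "\<And>z. z \<in> closure {z. g z \<noteq> 0} \<Longrightarrow> norm z \<le> B"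
    unfolding bounded_iff by auto
  have "supp_in g B" unfolding supp_in_def
  proof (intro allI impI)
    fix x y assume "g (x, y) \<noteq> 0"
    hence "norm (x, y) \<le> B" using B closure_subset by (meson subsetD mem_Collect_eq)
    moreover have "\<bar>x\<bar> \<le> norm (x,y)" "\<bar>y\<bar> \<le> norm (x,y)"
      using norm_fst_le[of x y] norm_snd_le[of y x] by auto
    ultimately show "\<bar>x\<bar> \<le> B \<and> \<bar>y\<bar> \<le> B" by linarith
  qed
  thus ?thesis by blast
qed

lemma supp_in_px: assumes "supp_in f r" shows "supp_in (px f) (r + 1)"
  unfolding supp_in_def
proof (intro allI impI)
  fix x y assume nz: "px f (x, y) \<noteq> 0"
  show "\<bar>x\<bar> \<le> r + 1 \<and> \<bar>y\<bar> \<le> r + 1"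
  proof (rule ccontr)
    assume "\<not> ?thesis"
    hence "\<bar>x\<bar> > r + 1 \<or> \<bar>y\<bar> > r" by auto
    moreover
    { assume "\<bar>y\<bar> > r"
      hence "(\<lambda>s. f (s, y)) = (\<lambda>s. 0)" using assms unfolding supp_in_def by force
      hence "px f (x, y) = 0" unfolding px_def by simp }
    moreover
    { assume hx: "\<bar>x\<bar> > r + 1"
      have ev: "eventually (\<lambda>s. f (s, y) = 0) (nhds x)"
        unfolding eventually_nhds
      proof (intro exI conjI ballI)
        show "open (ball x 1)" "x \<in> ball x 1" by auto
        fix s assume "s \<in> ball x 1"
        hence "\<bar>s\<bar> > r" using hx by (auto simp: dist_real_def)
        thus "f (s, y) = 0" using assms unfolding supp_in_def by force
      qed
      have "DERIV (\<lambda>s. f (s, y)) x :> 0"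
        using DERIV_cong_ev[OF refl ev refl] by simp
      hence "px f (x, y) = 0" unfolding px_def by (simp add: DERIV_imp_deriv) }
    ultimately show False using nz by blast
  qed
qed

lemma supp_in_py: assumes "supp_in f r" shows "supp_in (py f) (r + 1)"
  unfolding supp_in_def
proof (intro allI impI)
  fix x y assume nz: "py f (x, y) \<noteq> 0"
  show "\<bar>x\<bar> \<le> r + 1 \<and> \<bar>y\<bar> \<le> r + 1"
  proof (rule ccontr)
    assume "\<not> ?thesis"
    hence "\<bar>y\<bar> > r + 1 \<or> \<bar>x\<bar> > r" by auto
    moreover
    { assume "\<bar>x\<bar> > r"
      hence "(\<lambda>t. f (x, t)) = (\<lambda>t. 0)" using assms unfolding supp_in_def by force
      hence "py f (x, y) = 0" unfolding py_def by simp }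
    moreover
    { assume hy: "\<bar>y\<bar> > r + 1"
      have ev: "eventually (\<lambda>t. f (x, t) = 0) (nhds y)"
        unfolding eventually_nhds
      proof (intro exI conjI ballI)
        show "open (ball y 1)" "y \<in> ball y 1" by auto
        fix s assume "s \<in> ball y 1"
        hence "\<bar>s\<bar> > r" using hy by (auto simp: dist_real_def)
        thus "f (x, s) = 0" using assms unfolding supp_in_def by force
      qed
      have "DERIV (\<lambda>t. f (x, t)) y :> 0"
        using DERIV_cong_ev[OF refl ev refl] by simp
      hence "py f (x, y) = 0" unfolding py_def by (simp add: DERIV_imp_deriv) }
    ultimately show False using nz by blast
  qed
qed

lemma smooth2_cont: "smooth2 g \<Longrightarrow> continuous_on UNIV (pderivs ds g)"
  unfolding smooth2_def by blast

lemma smooth2_dx: assumes "smooth2 g"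
  shows "((\<lambda>s. pderivs ds g (s, y)) has_real_derivative pderivs (True # ds) g (x, y)) (at x)"
proof -
  have "(\<lambda>s. pderivs ds g (s, y)) differentiable (at x)" using assms unfolding smooth2_def by blast
  hence "DERIV (\<lambda>s. pderivs ds g (s, y)) x :> deriv (\<lambda>s. pderivs ds g (s, y)) x"
    using DERIV_deriv_iff_real_differentiable by blast
  thus ?thesis by (simp add: px_def)
qed

lemma smooth2_dy: assumes "smooth2 g"
  shows "((\<lambda>t. pderivs ds g (x, t)) has_real_derivative pderivs (False # ds) g (x, y)) (at y)"
proof -
  have "(\<lambda>t. pderivs ds g (x, t)) differentiable (at y)" using assms unfolding smooth2_def by blast
  hence "DERIV (\<lambda>t. pderivs ds g (x, t)) y :> deriv (\<lambda>t. pderivs ds g (x, t)) y"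
    using DERIV_deriv_iff_real_differentiable by blast
  thus ?thesis by (simp add: py_def)
qed

lemma pderivs_diff: assumes "smooth2 f" "smooth2 g"
  shows "pderivs ds (\<lambda>z. f z - g z) = (\<lambda>z. pderivs ds f z - pderivs ds g z)"
proof (induction ds)
  case Nil then show ?case by simp
next
  case (Cons d ds)
  show ?case
  proof (cases d)
    case True
    show ?thesis
    proof
      fix z :: "real \<times> real" obtain x y where z: "z = (x, y)" by force
      have "DERIV (\<lambda>s. pderivs ds f (s, y) - pderivs ds g (s, y)) x :>
          pderivs (True # ds) f (x, y) - pderivs (True # ds) g (x, y)"
        by (intro DERIV_diff smooth2_dx assms)
      thus "pderivs (d # ds) (\<lambda>z. f z - g z) z = pderivs (d # ds) f z - pderivs (d # ds) g z"
        using True z Cons.IH by (simp add: px_def DERIV_imp_deriv)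
    qed
  next
    case False
    show ?thesis
    proof
      fix z :: "real \<times> real" obtain x y where z: "z = (x, y)" by force
      have "DERIV (\<lambda>t. pderivs ds f (x, t) - pderivs ds g (x, t)) y :>
          pderivs (False # ds) f (x, y) - pderivs (False # ds) g (x, y)"
        by (intro DERIV_diff smooth2_dy assms)
      thus "pderivs (d # ds) (\<lambda>z. f z - g z) z = pderivs (d # ds) f z - pderivs (d # ds) g z"
        using False z Cons.IH by (simp add: py_def DERIV_imp_deriv)
    qed
  qed
qed

lemma smooth2_diff: assumes "smooth2 f" "smooth2 g" shows "smooth2 (\<lambda>z. f z - g z)"
  unfolding smooth2_def pderivs_diff[OF assms]
proof (intro allI conjI)
  fix ds x y
  show "continuous_on UNIV (\<lambda>z. pderivs ds f z - pderivs ds g z)"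
    using assms by (intro continuous_intros smooth2_cont)
  show "(\<lambda>s. pderivs ds f (s, y) - pderivs ds g (s, y)) differentiable at x"
    using DERIV_diff[OF smooth2_dx[OF assms(1)] smooth2_dx[OF assms(2)]] real_differentiable_def by blast
  show "(\<lambda>t. pderivs ds f (x, t) - pderivs ds g (x, t)) differentiable at y"
    using DERIV_diff[OF smooth2_dy[OF assms(1)] smooth2_dy[OF assms(2)]] real_differentiable_def by blast
qed

lemma C0inf_diff: assumes "f \<in> C0inf" "g \<in> C0inf" shows "(\<lambda>z. f z - g z) \<in> C0inf"
proof -
  have sub: "closure {z. f z - g z \<noteq> 0} \<subseteq> closure {z. f z \<noteq> 0} \<union> closure {z. g z \<noteq> 0}"
  proof -
    have "{z. f z - g z \<noteq> 0} \<subseteq> {z. f z \<noteq> 0} \<union> {z. g z \<noteq> 0}" by auto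
    hence "closure {z. f z - g z \<noteq> 0} \<subseteq> closure ({z. f z \<noteq> 0} \<union> {z. g z \<noteq> 0})" by (rule closure_mono)
    thus ?thesis by (simp add: closure_Un)
  qed
  moreover have "compact (closure {z. f z \<noteq> 0} \<union> closure {z. g z \<noteq> 0})"
    using assms unfolding C0inf_def by auto
  ultimately have "compact ((closure {z. f z \<noteq> 0} \<union> closure {z. g z \<noteq> 0}) \<inter> closure {z. f z - g z \<noteq> 0})"
    by (intro compact_Int_closed) auto
  moreover have "(closure {z. f z \<noteq> 0} \<union> closure {z. g z \<noteq> 0}) \<inter> closure {z. f z - g z \<noteq> 0} = closure {z. f z - g z \<noteq> 0}"
    using sub by blast
  ultimately have "compact (closure {z. f z - g z \<noteq> 0})" by simp
  thus ?thesis using assms smooth2_diff unfolding C0inf_def by auto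
qed

abbreviation "BX R \<equiv> cbox (-R, -R) (R::real, R::real)"

lemma lborel_box:
  fixes f :: "real \<times> real \<Rightarrow> real"
  assumes c: "continuous_on UNIV f" and z: "\<And>z. f z \<noteq> 0 \<Longrightarrow> z \<in> BX R"
  shows "integrable lborel f" "integral\<^sup>L lborel f = integral (BX R) f"
proof -
  have eq: "(\<lambda>z. indicator (BX R) z *\<^sub>R f z) = f"
    using z by (auto simp: indicator_def fun_eq_iff)
  have si: "integrable lborel (\<lambda>z. indicator (BX R) z *\<^sub>R f z)"
    by (rule borel_integrable_compact) (auto intro: continuous_on_subset[OF c])
  thus "integrable lborel f" using eq by simp
  have "set_integrable lborel (BX R) f" using si unfolding set_integrable_def .
  from set_borel_integral_eq_integral(2)[OF this]
  show "integral\<^sup>L lborel f = integral (BX R) f" unfolding set_lebesgue_integral_def eq .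
qed

lemma box_iter:
  fixes f :: "real \<times> real \<Rightarrow> real"
  assumes c: "continuous_on UNIV f"
  shows "integral (BX R) f = integral {-R..R} (\<lambda>x. integral {-R..R} (\<lambda>y. f (x, y)))"
    "integral (BX R) f = integral {-R..R} (\<lambda>y. integral {-R..R} (\<lambda>x. f (x, y)))"
proof -
  have c2: "continuous_on (BX R) f" using continuous_on_subset[OF c] by blast
  show 1: "integral (BX R) f = integral {-R..R} (\<lambda>x. integral {-R..R} (\<lambda>y. f (x, y)))"
    using integral_prod_continuous[OF c2] by simp
  have c3: "continuous_on (BX R) (\<lambda>(x, y). f (x, y))" using c2 by simp
  show "integral (BX R) f = integral {-R..R} (\<lambda>y. integral {-R..R} (\<lambda>x. f (x, y)))"
    using integral_swap_continuous[OF c3] 1 by simp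
qed

lemma tt_lemma:
  fixes I X Y :: real
  assumes h: "\<And>t. t > 0 \<Longrightarrow> I \<le> (t * X + Y / t) / 2" and X: "X \<ge> 0" and Y: "Y \<ge> 0"
  shows "I \<le> sqrt X * sqrt Y"
proof (cases "X > 0 \<and> Y > 0")
  case True
  define t where "t = sqrt Y / sqrt X"
  have tp: "t > 0" using True by (simp add: t_def)
  have sx: "sqrt X > 0" "sqrt X * sqrt X = X" using True by auto
  have sy: "sqrt Y > 0" "sqrt Y * sqrt Y = Y" using True by auto
  have "t * X = sqrt Y / sqrt X * (sqrt X * sqrt X)" using sx(2) by (simp add: t_def)
  also have "\<dots> = sqrt X * sqrt Y" using sx(1) by (simp add: field_simps)
  finally have "t * X = sqrt X * sqrt Y" .
  moreover have "Y / t = sqrt X * sqrt Y" unfolding t_def using sx sy by (simp add: field_simps)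
  ultimately show ?thesis using h[OF tp] by simp
next
  case False
  show ?thesis
  proof (rule ccontr)
    assume "\<not> ?thesis"
    hence I: "I > 0" using False X Y by auto
    show False
    proof (cases "X = 0")
      case True
      define t where "t = (Y + 1) / I"
      have tp: "t > 0" using I Y by (simp add: t_def)
      have "Y / t = Y * I / (Y + 1)" using I Y by (simp add: t_def)
      also have "\<dots> < I" using I Y by (simp add: field_simps)
      finally show False using h[OF tp] True I by simp
    next
      case False2: False
      hence "Y = 0" "X > 0" using False X Y by auto
      define t where "t = I / X"
      have tp: "t > 0" using I \<open>X > 0\<close> by (simp add: t_def)
      have "t * X = I" using \<open>X > 0\<close> by (simp add: t_def)
      thus False using h[OF tp] \<open>Y = 0\<close> I by simp
    qed
  qed
qed

lemma CS_box:
  fixes f h :: "real \<times> real \<Rightarrow> real"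
  assumes cf: "continuous_on UNIV f" and ch: "continuous_on UNIV h"
  shows "integral (BX R) (\<lambda>z. \<bar>f z * h z\<bar>) \<le>
    sqrt (integral (BX R) (\<lambda>z. (f z)\<^sup>2)) * sqrt (integral (BX R) (\<lambda>z. (h z)\<^sup>2))"
proof (rule tt_lemma)
  have cf': "continuous_on (BX R) f" and ch': "continuous_on (BX R) h"
    using cf ch continuous_on_subset by blast+
  fix t :: real assume t: "t > 0"
  have pw: "\<bar>f z * h z\<bar> \<le> (t * (f z)\<^sup>2 + (h z)\<^sup>2 / t) / 2" for z
  proof -
    have "0 \<le> (t * \<bar>f z\<bar> - \<bar>h z\<bar>)\<^sup>2" by simp
    hence "2 * t * \<bar>f z * h z\<bar> \<le> t * t * (f z)\<^sup>2 + (h z)\<^sup>2"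
      by (simp add: power2_eq_square algebra_simps abs_mult)
    moreover have "t * (t * (f z)\<^sup>2 + (h z)\<^sup>2 / t) = t * t * (f z)\<^sup>2 + (h z)\<^sup>2"
      using t by (simp add: field_simps)
    ultimately have "t * (2 * \<bar>f z * h z\<bar>) \<le> t * (t * (f z)\<^sup>2 + (h z)\<^sup>2 / t)"
      by (simp add: algebra_simps)
    hence "2 * \<bar>f z * h z\<bar> \<le> t * (f z)\<^sup>2 + (h z)\<^sup>2 / t" using t by simp
    thus ?thesis by simp
  qed
  have "integral (BX R) (\<lambda>z. \<bar>f z * h z\<bar>) \<le> integral (BX R) (\<lambda>z. (t * (f z)\<^sup>2 + (h z)\<^sup>2 / t) / 2)"
    using t by (intro integral_le integrable_continuous continuous_intros cf' ch' pw) auto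
  also have "\<dots> = (t * integral (BX R) (\<lambda>z. (f z)\<^sup>2) + integral (BX R) (\<lambda>z. (h z)\<^sup>2) / t) / 2"
  proof -
    have i1: "(\<lambda>z. t * (f z)\<^sup>2) integrable_on BX R" "(\<lambda>z. (h z)\<^sup>2 / t) integrable_on BX R"
      using t by (auto intro!: integrable_continuous continuous_intros cf' ch')
    have "integral (BX R) (\<lambda>z. (t * (f z)\<^sup>2 + (h z)\<^sup>2 / t) / 2) =
       integral (BX R) (\<lambda>z. t * (f z)\<^sup>2 + (h z)\<^sup>2 / t) / 2" by (rule integral_divide)
    also have "\<dots> = (integral (BX R) (\<lambda>z. t * (f z)\<^sup>2) + integral (BX R) (\<lambda>z. (h z)\<^sup>2 / t)) / 2"
      by (simp add: integral_add[OF i1])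
    also have "\<dots> = (t * integral (BX R) (\<lambda>z. (f z)\<^sup>2) + integral (BX R) (\<lambda>z. (h z)\<^sup>2) / t) / 2"
      by (simp add: integral_divide)
    finally show ?thesis .
  qed
  finally show "integral (BX R) (\<lambda>z. \<bar>f z * h z\<bar>) \<le> (t * integral (BX R) (\<lambda>z. (f z)\<^sup>2) + integral (BX R) (\<lambda>z. (h z)\<^sup>2) / t) / 2" .
next
  have cf': "continuous_on (BX R) f" and ch': "continuous_on (BX R) h"
    using cf ch continuous_on_subset by blast+
  show "0 \<le> integral (BX R) (\<lambda>z. (f z)\<^sup>2)" "0 \<le> integral (BX R) (\<lambda>z. (h z)\<^sup>2)"
    by (intro integral_nonneg integrable_continuous continuous_intros cf' ch'; simp)+
qed

declare pderivs.simps[simp del]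
lemma pd0[simp]: "pderivs [] f = f" by (simp add: pderivs.simps)

lemma ftc_real:
  fixes F f :: "real \<Rightarrow> real"
  assumes "a \<le> b" "\<And>s. s \<in> {a..b} \<Longrightarrow> (F has_real_derivative f s) (at s within {a..b})"
  shows "(f has_integral (F b - F a)) {a..b}"
  using assms by (intro fundamental_theorem_of_calculus) (auto simp: has_real_derivative_iff_has_vector_derivative)

context
  fixes g :: "real \<times> real \<Rightarrow> real" and r R :: real
  assumes gC: "g \<in> C0inf" and sg: "supp_in g r" and Rr: "r + 3 \<le> R" and r0: "0 \<le> r"
begin

lemma sm: "smooth2 g" using gC unfolding C0inf_def by blast

lemma supp_pd: "supp_in (pderivs ds g) (r + real (length ds))"
proof (induction ds)
  case Nil then show ?case using sg by simp
next
  case (Cons d ds)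
  show ?case
  proof (cases d)
    case True
    then show ?thesis using supp_in_px[OF Cons.IH] by (simp add: algebra_simps pderivs.simps)
  next
    case False
    then show ?thesis using supp_in_py[OF Cons.IH] by (simp add: algebra_simps pderivs.simps)
  qed
qed

lemma vanish: assumes "length ds \<le> 2" "\<bar>x\<bar> \<ge> R \<or> \<bar>y\<bar> \<ge> R" shows "pderivs ds g (x, y) = 0"
proof (rule ccontr)
  assume "pderivs ds g (x, y) \<noteq> 0"
  hence "\<bar>x\<bar> \<le> r + real (length ds) \<and> \<bar>y\<bar> \<le> r + real (length ds)"
    using supp_pd[of ds] unfolding supp_in_def by blast
  moreover have "real (length ds) \<le> 2" using assms(1) by simp
  ultimately show False using assms(2) Rr by linarith
qed

lemma vanishB: assumes "length ds \<le> 2" "pderivs ds g z \<noteq> 0" shows "z \<in> BX R"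
proof -
  obtain x y where z: "z = (x, y)" by force
  have "\<bar>x\<bar> < R \<and> \<bar>y\<bar> < R" using vanish[OF assms(1), of x y] assms(2) z by force
  thus ?thesis using z by (auto simp: cbox_Pair_eq abs_less_iff)
qed

lemma cont_pd: "continuous_on S (pderivs ds g)"
  using smooth2_cont[OF sm] continuous_on_subset by blast

lemma cont_pd2[continuous_intros]:
  "continuous_on S a \<Longrightarrow> continuous_on S b \<Longrightarrow> continuous_on S (\<lambda>p. pderivs ds g (a p, b p))"
  by (rule continuous_on_compose2[OF smooth2_cont[OF sm]]) (auto intro: continuous_on_Pair)

lemma cont_pd3[continuous_intros]: "continuous_on S (\<lambda>z. pderivs ds g z)"
  using cont_pd by simp

lemma cont_pd4[continuous_intros]: "continuous_on S (\<lambda>(x, y). pderivs ds g (x, y))"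
  using cont_pd by simp

lemma dx: "((\<lambda>s. pderivs ds g (s, y)) has_real_derivative pderivs (True # ds) g (x, y)) (at x within S)"
  using smooth2_dx[OF sm] has_field_derivative_at_within by blast

lemma dy: "((\<lambda>t. pderivs ds g (x, t)) has_real_derivative pderivs (False # ds) g (x, y)) (at y within S)"
  using smooth2_dy[OF sm] has_field_derivative_at_within by blast

lemma g_int: assumes "-R \<le> x" shows "integral {-R..x} (\<lambda>s. pderivs [True] g (s, t)) = g (x, t)"
proof -
  have "((\<lambda>s. pderivs [True] g (s, t)) has_integral (pderivs [] g (x, t) - pderivs [] g (-R, t))) {-R..x}"
    by (rule ftc_real[OF assms]) (rule dx)
  moreover have "pderivs [] g (-R, t) = 0" by (rule vanish) auto
  ultimately show ?thesis by auto
qed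

lemma G_int: assumes "-R \<le> x" shows "pderivs [False] g (x, y) = integral {-R..x} (\<lambda>s. pderivs [False, True] g (s, y))"
proof -
  have "((\<lambda>t. integral (cbox (-R) x) (\<lambda>s. pderivs [True] g (s, t))) has_field_derivative
      integral (cbox (-R) x) (\<lambda>s. pderivs [False, True] g (s, y))) (at y within UNIV)"
  proof (rule leibniz_rule_field_derivative)
    show "\<And>t s. t \<in> UNIV \<Longrightarrow> s \<in> cbox (-R) x \<Longrightarrow>
      ((\<lambda>t. pderivs [True] g (s, t)) has_field_derivative pderivs [False, True] g (s, t)) (at t within UNIV)"
      by (rule dy)
    show "\<And>t. t \<in> UNIV \<Longrightarrow> (\<lambda>s. pderivs [True] g (s, t)) integrable_on cbox (-R) x"
      by (intro integrable_continuous continuous_intros)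
    show "continuous_on (UNIV \<times> cbox (-R) x) (\<lambda>(t, s). pderivs [False, True] g (s, t))"
      by (simp add: case_prod_beta) (intro continuous_intros)
  qed auto
  hence "((\<lambda>t. g (x, t)) has_field_derivative
      integral {-R..x} (\<lambda>s. pderivs [False, True] g (s, y))) (at y)"
    using g_int[OF assms] by simp
  moreover have "((\<lambda>t. g (x, t)) has_field_derivative pderivs [False] g (x, y)) (at y)"
    using dy[of "[]" x y UNIV] by simp
  ultimately show ?thesis using DERIV_unique by blast
qed

lemma Dxinv_w: "Dxinv (pderivs [False, True] g) = pderivs [False] g"
proof
  fix z :: "real \<times> real"
  obtain x y where z: "z = (x, y)" by force
  show "Dxinv (pderivs [False, True] g) z = pderivs [False] g z"
  proof (cases "x < -R")
    case True
    have "(\<lambda>s. indicator {..x} s *\<^sub>R pderivs [False, True] g (s, y)) = (\<lambda>s. 0)"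
    proof
      fix s show "indicator {..x} s *\<^sub>R pderivs [False, True] g (s, y) = 0"
      proof (cases "s \<le> x")
        case True2: True
        hence "R \<le> \<bar>s\<bar>" using True by arith
        thus ?thesis using vanish[of "[False, True]" s y] by simp
      qed simp
    qed
    moreover have "pderivs [False] g (x, y) = 0" using True by (intro vanish) auto
    ultimately show ?thesis using z unfolding Dxinv_def set_lebesgue_integral_def by simp
  next
    case False
    have "(\<lambda>s. indicator {..x} s *\<^sub>R pderivs [False, True] g (s, y)) =
          (\<lambda>s. indicator {-R..x} s *\<^sub>R pderivs [False, True] g (s, y))"
    proof
      fix s show "indicator {..x} s *\<^sub>R pderivs [False, True] g (s, y) =
          indicator {-R..x} s *\<^sub>R pderivs [False, True] g (s, y)"
      proof (cases "-R \<le> s")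
        case False2: False
        hence "R \<le> \<bar>s\<bar>" by arith
        thus ?thesis using vanish[of "[False, True]" s y] by simp
      qed (auto simp: indicator_def)
    qed
    hence "Dxinv (pderivs [False, True] g) z = (LINT s:{-R..x}|lborel. pderivs [False, True] g (s, y))"
      using z unfolding Dxinv_def set_lebesgue_integral_def by simp
    also have "\<dots> = integral {-R..x} (\<lambda>s. pderivs [False, True] g (s, y))"
    proof (rule set_borel_integral_eq_integral(2))
      show "set_integrable lborel {-R..x} (\<lambda>s. pderivs [False, True] g (s, y))"
        unfolding set_integrable_def
        by (rule borel_integrable_compact) (auto intro!: continuous_intros)
    qed
    also have "\<dots> = pderivs [False] g z" using G_int False z by simp
    finally show ?thesis .
  qed
qed

lemma Gdx: assumes "x \<in> {-R..R}"
  shows "((\<lambda>x. pderivs [False] g (x, y)) has_real_derivative pderivs [False, True] g (x, y)) (at x within {-R..R})"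
proof -
  have "((\<lambda>x. integral {-R..x} (\<lambda>s. pderivs [False, True] g (s, y))) has_vector_derivative
      pderivs [False, True] g (x, y)) (at x within {-R..R})"
    by (rule integral_has_vector_derivative[OF _ assms]) (intro continuous_intros)
  hence "((\<lambda>x. pderivs [False] g (x, y)) has_vector_derivative
      pderivs [False, True] g (x, y)) (at x within {-R..R})"
    by (rule has_vector_derivative_transform[OF assms, rotated]) (auto simp: G_int)
  thus ?thesis by (simp add: has_real_derivative_iff_has_vector_derivative)
qed


abbreviation "uu \<equiv> pderivs [True] g"
abbreviation "vv \<equiv> pderivs [True, True] g"
abbreviation "ww \<equiv> pderivs [False, True] g"
abbreviation "GG \<equiv> pderivs [False] g"

lemma I1: "(uu (x, y))\<^sup>2 \<le> 2 * integral {-R..R} (\<lambda>s. \<bar>uu (s, y) * vv (s, y)\<bar>)"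
proof -
  have bnn: "0 \<le> integral {-R..R} (\<lambda>s. \<bar>uu (s, y) * vv (s, y)\<bar>)"
    by (intro integral_nonneg integrable_continuous_interval continuous_intros) auto
  show ?thesis
  proof (cases "x \<in> {-R..R}")
    case False
    hence "uu (x, y) = 0" by (intro vanish) auto
    thus ?thesis using bnn by simp
  next
    case True
    have "((\<lambda>s. 2 * uu (s, y) * vv (s, y)) has_integral ((uu (x, y))\<^sup>2 - (uu (-R, y))\<^sup>2)) {-R..x}"
    proof (rule ftc_real)
      show "-R \<le> x" using True by simp
      fix s
      have "((\<lambda>s. uu (s, y) * uu (s, y)) has_real_derivative
          vv (s, y) * uu (s, y) + vv (s, y) * uu (s, y)) (at s within {-R..x})"
        using dx[of "[True]" y s] by (intro DERIV_mult) (auto simp: pderivs.simps)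
      thus "((\<lambda>s. (uu (s, y))\<^sup>2) has_real_derivative 2 * uu (s, y) * vv (s, y)) (at s within {-R..x})"
        by (simp add: power2_eq_square algebra_simps)
    qed
    moreover have "uu (-R, y) = 0" by (intro vanish) auto
    ultimately have eq: "(uu (x, y))\<^sup>2 = integral {-R..x} (\<lambda>s. 2 * uu (s, y) * vv (s, y))"
      by (simp add: integral_unique)
    also have "\<dots> \<le> integral {-R..x} (\<lambda>s. 2 * \<bar>uu (s, y) * vv (s, y)\<bar>)"
      by (intro integral_le integrable_continuous_interval continuous_intros) (auto simp del: abs_mult)
    also have "\<dots> \<le> integral {-R..R} (\<lambda>s. 2 * \<bar>uu (s, y) * vv (s, y)\<bar>)"
      using True by (intro integral_subset_le integrable_continuous_interval continuous_intros) auto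
    also have "\<dots> = 2 * integral {-R..R} (\<lambda>s. \<bar>uu (s, y) * vv (s, y)\<bar>)"
      by simp
    finally show ?thesis .
  qed
qed


lemma parts: "integral {-R..R} (\<lambda>x. uu (x, t) * ww (x, t)) = - integral {-R..R} (\<lambda>x. vv (x, t) * GG (x, t))"
proof -
  have "((\<lambda>x. vv (x, t) * GG (x, t) + ww (x, t) * uu (x, t)) has_integral
      (uu (R, t) * GG (R, t) - uu (-R, t) * GG (-R, t))) {-R..R}"
  proof (rule ftc_real)
    show "-R \<le> R" using Rr r0 by simp
    fix x assume x: "x \<in> {-R..R}"
    show "((\<lambda>x. uu (x, t) * GG (x, t)) has_real_derivative vv (x, t) * GG (x, t) + ww (x, t) * uu (x, t))
        (at x within {-R..R})"
      using dx[of "[True]" t x] Gdx[OF x, of t] by (intro DERIV_mult) (auto simp: pderivs.simps)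
  qed
  moreover have "uu (R, t) = 0" using r0 Rr by (intro vanish) auto
  moreover have "uu (-R, t) = 0" using r0 Rr by (intro vanish) auto
  ultimately have "integral {-R..R} (\<lambda>x. vv (x, t) * GG (x, t) + ww (x, t) * uu (x, t)) = 0"
    by (simp add: integral_unique)
  moreover have "integral {-R..R} (\<lambda>x. vv (x, t) * GG (x, t) + ww (x, t) * uu (x, t)) =
      integral {-R..R} (\<lambda>x. vv (x, t) * GG (x, t)) + integral {-R..R} (\<lambda>x. uu (x, t) * ww (x, t))"
    by (subst integral_add) (auto intro!: integrable_continuous_interval continuous_intros simp: mult.commute)
  ultimately show ?thesis by simp
qed

lemma Pnn: "0 \<le> integral (BX R) (\<lambda>z. \<bar>vv z * GG z\<bar>)"
  by (intro integral_nonneg integrable_continuous continuous_intros) auto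

lemma I2: "integral {-R..R} (\<lambda>x. (uu (x, y))\<^sup>2) \<le> 2 * integral (BX R) (\<lambda>z. \<bar>vv z * GG z\<bar>)"
proof (cases "y \<in> {-R..R}")
  case False
  hence "R \<le> \<bar>y\<bar>" by auto
  hence "(\<lambda>x. (uu (x, y))\<^sup>2) = (\<lambda>x. 0)" by (intro ext) (simp add: vanish)
  thus ?thesis using Pnn by simp
next
  case True
  have h1: "(uu (x, y))\<^sup>2 = integral {-R..y} (\<lambda>t. 2 * uu (x, t) * ww (x, t))" for x
  proof -
    have "((\<lambda>t. 2 * uu (x, t) * ww (x, t)) has_integral ((uu (x, y))\<^sup>2 - (uu (x, -R))\<^sup>2)) {-R..y}"
    proof (rule ftc_real)
      show "-R \<le> y" using True by simp
      fix t
      have "((\<lambda>t. uu (x, t) * uu (x, t)) has_real_derivative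
          ww (x, t) * uu (x, t) + ww (x, t) * uu (x, t)) (at t within {-R..y})"
        using dy[of "[True]" x t] by (intro DERIV_mult) (auto simp: pderivs.simps)
      thus "((\<lambda>t. (uu (x, t))\<^sup>2) has_real_derivative 2 * uu (x, t) * ww (x, t)) (at t within {-R..y})"
        by (simp add: power2_eq_square algebra_simps)
    qed
    moreover have "uu (x, -R) = 0" by (intro vanish) auto
    ultimately show ?thesis by (simp add: integral_unique)
  qed
  define c where "c t = integral {-R..R} (\<lambda>x. vv (x, t) * GG (x, t))" for t
  define d where "d t = integral {-R..R} (\<lambda>x. \<bar>vv (x, t) * GG (x, t)\<bar>)" for t
  have cc: "continuous_on S c" for S
    unfolding c_def box_real(2)[symmetric]
    by (rule integral_continuous_on_param) (auto intro!: continuous_intros simp: case_prod_beta)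
  have dc: "continuous_on S d" for S
    unfolding d_def box_real(2)[symmetric]
    by (rule integral_continuous_on_param) (auto intro!: continuous_intros simp: case_prod_beta)
  have dnn: "0 \<le> d t" for t
    unfolding d_def by (intro integral_nonneg integrable_continuous_interval continuous_intros) auto
  have "integral {-R..R} (\<lambda>x. (uu (x, y))\<^sup>2) =
      integral {-R..R} (\<lambda>x. integral {-R..y} (\<lambda>t. 2 * uu (x, t) * ww (x, t)))"
    using h1 by simp
  also have "\<dots> = integral {-R..y} (\<lambda>t. integral {-R..R} (\<lambda>x. 2 * uu (x, t) * ww (x, t)))"
    unfolding box_real(2)[symmetric]
    by (rule integral_swap_continuous) (auto intro!: continuous_intros simp: case_prod_beta)
  also have "\<dots> = integral {-R..y} (\<lambda>t. - 2 * c t)"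
  proof -
    have "integral {-R..R} (\<lambda>x. 2 * uu (x, t) * ww (x, t)) = - 2 * c t" for t
      using parts[of t] unfolding c_def by (simp add: mult.assoc)
    thus ?thesis by simp
  qed
  also have "\<dots> \<le> integral {-R..y} (\<lambda>t. 2 * d t)"
  proof -
    have "norm (integral {-R..y} (\<lambda>t. - 2 * c t)) \<le> integral {-R..y} (\<lambda>t. 2 * d t)"
    proof (rule integral_norm_bound_integral)
      show "(\<lambda>t. - 2 * c t) integrable_on {-R..y}" "(\<lambda>t. 2 * d t) integrable_on {-R..y}"
        by (intro integrable_continuous_interval continuous_intros cc dc)+
      fix t
      have "norm (c t) \<le> d t" unfolding c_def d_def
        by (rule integral_norm_bound_integral) (auto intro!: integrable_continuous_interval continuous_intros)
      thus "norm (- 2 * c t) \<le> 2 * d t" by simp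
    qed
    thus ?thesis by simp
  qed
  also have "\<dots> \<le> integral {-R..R} (\<lambda>t. 2 * d t)"
    using True dnn by (intro integral_subset_le integrable_continuous_interval continuous_intros dc) auto
  also have "\<dots> = 2 * integral {-R..R} d" by simp
  also have "integral {-R..R} d = integral (BX R) (\<lambda>z. \<bar>vv z * GG z\<bar>)"
    unfolding d_def by (rule box_iter(2)[symmetric]) (intro continuous_intros)
  finally show ?thesis .
qed


lemma I3: "integral (BX R) (\<lambda>z. (uu z) ^ 4) \<le>
   4 * integral (BX R) (\<lambda>z. \<bar>vv z * GG z\<bar>) * integral (BX R) (\<lambda>z. \<bar>uu z * vv z\<bar>)"
proof -
  define P where "P = integral (BX R) (\<lambda>z. \<bar>vv z * GG z\<bar>)"
  define b where "b y = integral {-R..R} (\<lambda>s. \<bar>uu (s, y) * vv (s, y)\<bar>)" for y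
  have bc: "continuous_on S b" for S
    unfolding b_def box_real(2)[symmetric]
    by (rule integral_continuous_on_param) (auto intro!: continuous_intros simp: case_prod_beta)
  have bnn: "0 \<le> b y" for y
    unfolding b_def by (intro integral_nonneg integrable_continuous_interval continuous_intros) auto
  have c4: "continuous_on S (\<lambda>y. integral {-R..R} (\<lambda>x. (uu (x, y)) ^ 4))" for S
    unfolding box_real(2)[symmetric]
    by (rule integral_continuous_on_param) (auto intro!: continuous_intros simp: case_prod_beta)
  have pt: "integral {-R..R} (\<lambda>x. (uu (x, y)) ^ 4) \<le> 4 * P * b y" for y
  proof -
    have "integral {-R..R} (\<lambda>x. (uu (x, y)) ^ 4) \<le> integral {-R..R} (\<lambda>x. 2 * b y * (uu (x, y))\<^sup>2)"
    proof (rule integral_le)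
      show "(\<lambda>x. (uu (x, y)) ^ 4) integrable_on {-R..R}" "(\<lambda>x. 2 * b y * (uu (x, y))\<^sup>2) integrable_on {-R..R}"
        by (intro integrable_continuous_interval continuous_intros)+
      fix x
      have "(uu (x, y))\<^sup>2 * (uu (x, y))\<^sup>2 \<le> (2 * b y) * (uu (x, y))\<^sup>2"
        using I1[of x y] unfolding b_def by (intro mult_right_mono) auto
      thus "(uu (x, y)) ^ 4 \<le> 2 * b y * (uu (x, y))\<^sup>2" by (simp add: power2_eq_square power4_eq_xxxx mult.assoc)
    qed
    also have "\<dots> = 2 * b y * integral {-R..R} (\<lambda>x. (uu (x, y))\<^sup>2)" by simp
    also have "\<dots> \<le> 2 * b y * (2 * P)"
      using I2[of y] bnn[of y] unfolding P_def by (intro mult_left_mono) auto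
    finally show ?thesis by (simp add: algebra_simps)
  qed
  have "integral (BX R) (\<lambda>z. (uu z) ^ 4) = integral {-R..R} (\<lambda>y. integral {-R..R} (\<lambda>x. (uu (x, y)) ^ 4))"
    by (rule box_iter(2)) (intro continuous_intros)
  also have "\<dots> \<le> integral {-R..R} (\<lambda>y. 4 * P * b y)"
    using pt by (intro integral_le integrable_continuous_interval continuous_intros c4 bc) auto
  also have "\<dots> = 4 * P * integral {-R..R} b" by simp
  also have "integral {-R..R} b = integral (BX R) (\<lambda>z. \<bar>uu z * vv z\<bar>)"
    unfolding b_def by (rule box_iter(2)[symmetric]) (intro continuous_intros)
  finally show ?thesis unfolding P_def .
qed

lemma core_box: "integral (BX R) (\<lambda>z. (uu z) ^ 4) \<le>
   4 * sqrt (integral (BX R) (\<lambda>z. (uu z)\<^sup>2)) * integral (BX R) (\<lambda>z. (vv z)\<^sup>2 + (GG z)\<^sup>2)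
     * sqrt (integral (BX R) (\<lambda>z. (vv z)\<^sup>2 + (GG z)\<^sup>2))"
proof -
  define L where "L = integral (BX R) (\<lambda>z. (uu z)\<^sup>2)"
  define V where "V = integral (BX R) (\<lambda>z. (vv z)\<^sup>2)"
  define W where "W = integral (BX R) (\<lambda>z. (GG z)\<^sup>2)"
  define P where "P = integral (BX R) (\<lambda>z. \<bar>vv z * GG z\<bar>)"
  define Q where "Q = integral (BX R) (\<lambda>z. \<bar>uu z * vv z\<bar>)"
  have K: "integral (BX R) (\<lambda>z. (vv z)\<^sup>2 + (GG z)\<^sup>2) = V + W"
    unfolding V_def W_def by (rule integral_add) (intro integrable_continuous continuous_intros)+
  have nn: "0 \<le> L" "0 \<le> V" "0 \<le> W" "0 \<le> P" "0 \<le> Q"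
    unfolding L_def V_def W_def P_def Q_def
    by (intro integral_nonneg integrable_continuous continuous_intros; simp)+
  have P: "P \<le> sqrt V * sqrt W" unfolding P_def V_def W_def by (intro CS_box continuous_intros)
  have Q: "Q \<le> sqrt L * sqrt V" unfolding Q_def L_def V_def by (intro CS_box continuous_intros)
  have "integral (BX R) (\<lambda>z. (uu z) ^ 4) \<le> 4 * P * Q" using I3 unfolding P_def Q_def .
  also have "\<dots> \<le> 4 * (sqrt V * sqrt W) * (sqrt L * sqrt V)"
    using P Q nn by (intro mult_mono) auto
  also have "\<dots> = 4 * sqrt L * V * sqrt W" using nn by (simp add: algebra_simps)
  also have "\<dots> \<le> 4 * sqrt L * (V + W) * sqrt (V + W)"
    using nn by (intro mult_mono) auto
  finally show ?thesis unfolding K L_def .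
qed


lemma px_uu: "px uu = vv" by (simp add: pderivs.simps)
lemma py_uu: "py uu = ww" by (simp add: pderivs.simps)

lemma Ykin_box: "integrable lborel (\<lambda>z. (px uu z)\<^sup>2 + (Dxinv (py uu) z)\<^sup>2)"
   "Ykin uu = integral (BX R) (\<lambda>z. (vv z)\<^sup>2 + (GG z)\<^sup>2)"
proof -
  have eq: "(\<lambda>z. (px uu z)\<^sup>2 + (Dxinv (py uu) z)\<^sup>2) = (\<lambda>z. (vv z)\<^sup>2 + (GG z)\<^sup>2)"
    unfolding px_uu py_uu Dxinv_w ..
  have c: "continuous_on UNIV (\<lambda>z. (vv z)\<^sup>2 + (GG z)\<^sup>2)" by (intro continuous_intros)
  have z: "z \<in> BX R" if "(vv z)\<^sup>2 + (GG z)\<^sup>2 \<noteq> 0" for z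
  proof (cases "vv z = 0")
    case True
    hence "GG z \<noteq> 0" using that by auto
    thus ?thesis by (rule vanishB[rotated]) simp
  next
    case False
    thus ?thesis by (rule vanishB[rotated]) simp
  qed
  show "integrable lborel (\<lambda>z. (px uu z)\<^sup>2 + (Dxinv (py uu) z)\<^sup>2)"
    unfolding eq by (rule lborel_box(1)[OF c z])
  show "Ykin uu = integral (BX R) (\<lambda>z. (vv z)\<^sup>2 + (GG z)\<^sup>2)"
    unfolding Ykin_def eq by (rule lborel_box(2)[OF c z])
qed

lemma pow_box: assumes "n > 0"
  shows "integrable lborel (\<lambda>z. (uu z) ^ n)" "integral\<^sup>L lborel (\<lambda>z. (uu z) ^ n) = integral (BX R) (\<lambda>z. (uu z) ^ n)"
proof -
  have c: "continuous_on UNIV (\<lambda>z. (uu z) ^ n)" by (intro continuous_intros)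
  have z: "z \<in> BX R" if "(uu z) ^ n \<noteq> 0" for z
    using that assms by (intro vanishB[of "[True]"]) auto
  show "integrable lborel (\<lambda>z. (uu z) ^ n)" by (rule lborel_box(1)[OF c z])
  show "integral\<^sup>L lborel (\<lambda>z. (uu z) ^ n) = integral (BX R) (\<lambda>z. (uu z) ^ n)" by (rule lborel_box(2)[OF c z])
qed

lemma Y_core:
  "integral\<^sup>L lborel (\<lambda>z. (uu z) ^ 4) \<le> 4 * sqrt (L2sq uu) * Ykin uu * sqrt (Ykin uu)"
  "integrable lborel (\<lambda>z. (uu z) ^ 4)" "integrable lborel (\<lambda>z. (uu z)\<^sup>2)"
  "0 \<le> Ykin uu" "uu \<in> borel_measurable lborel"
proof -
  show "integral\<^sup>L lborel (\<lambda>z. (uu z) ^ 4) \<le> 4 * sqrt (L2sq uu) * Ykin uu * sqrt (Ykin uu)"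
    unfolding L2sq_def Ykin_box(2) pow_box(2)[of 4, simplified] pow_box(2)[of 2, simplified] by (rule core_box)
  show "integrable lborel (\<lambda>z. (uu z) ^ 4)" "integrable lborel (\<lambda>z. (uu z)\<^sup>2)"
    by (rule pow_box; simp)+
  show "0 \<le> Ykin uu" unfolding Ykin_box(2)
    by (intro integral_nonneg integrable_continuous continuous_intros) auto
  show "uu \<in> borel_measurable lborel"
    using borel_measurable_continuous_onI[OF cont_pd] by simp
qed

end

lemma mink_box:
  fixes a1 a2 b1 b2 :: "real \<times> real \<Rightarrow> real"
  assumes c: "continuous_on UNIV a1" "continuous_on UNIV a2" "continuous_on UNIV b1" "continuous_on UNIV b2"
  shows "sqrt (integral (BX R) (\<lambda>z. (a1 z + b1 z)\<^sup>2 + (a2 z + b2 z)\<^sup>2)) \<le>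
    sqrt (integral (BX R) (\<lambda>z. (a1 z)\<^sup>2 + (a2 z)\<^sup>2)) + sqrt (integral (BX R) (\<lambda>z. (b1 z)\<^sup>2 + (b2 z)\<^sup>2))"
proof -
  have c': "continuous_on (BX R) a1" "continuous_on (BX R) a2" "continuous_on (BX R) b1" "continuous_on (BX R) b2"
    using c continuous_on_subset by blast+
  define X where "X = integral (BX R) (\<lambda>z. (a1 z)\<^sup>2 + (a2 z)\<^sup>2)"
  define Y where "Y = integral (BX R) (\<lambda>z. (b1 z)\<^sup>2 + (b2 z)\<^sup>2)"
  define I where "I = integral (BX R) (\<lambda>z. a1 z * b1 z + a2 z * b2 z)"
  have iX: "(\<lambda>z. (a1 z)\<^sup>2 + (a2 z)\<^sup>2) integrable_on BX R" and iY: "(\<lambda>z. (b1 z)\<^sup>2 + (b2 z)\<^sup>2) integrable_on BX R"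
    and iI: "(\<lambda>z. a1 z * b1 z + a2 z * b2 z) integrable_on BX R"
    by (intro integrable_continuous continuous_intros c')+
  have X0: "0 \<le> X" unfolding X_def by (intro integral_nonneg iX) auto
  have Y0: "0 \<le> Y" unfolding Y_def by (intro integral_nonneg iY) auto
  have IXY: "I \<le> sqrt X * sqrt Y"
  proof (rule tt_lemma[OF _ X0 Y0])
    fix t :: real assume t: "t > 0"
    have pw: "a1 z * b1 z + a2 z * b2 z \<le> (t * ((a1 z)\<^sup>2 + (a2 z)\<^sup>2) + ((b1 z)\<^sup>2 + (b2 z)\<^sup>2) / t) / 2" for z
    proof -
      have "0 \<le> (t * a1 z - b1 z)\<^sup>2 + (t * a2 z - b2 z)\<^sup>2" by simp
      hence "2 * t * (a1 z * b1 z + a2 z * b2 z) \<le> t * t * ((a1 z)\<^sup>2 + (a2 z)\<^sup>2) + ((b1 z)\<^sup>2 + (b2 z)\<^sup>2)"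
        by (simp add: power2_eq_square algebra_simps)
      moreover have "t * (t * ((a1 z)\<^sup>2 + (a2 z)\<^sup>2) + ((b1 z)\<^sup>2 + (b2 z)\<^sup>2) / t) = t * t * ((a1 z)\<^sup>2 + (a2 z)\<^sup>2) + ((b1 z)\<^sup>2 + (b2 z)\<^sup>2)"
        using t by (simp add: field_simps)
      ultimately have "t * (2 * (a1 z * b1 z + a2 z * b2 z)) \<le> t * (t * ((a1 z)\<^sup>2 + (a2 z)\<^sup>2) + ((b1 z)\<^sup>2 + (b2 z)\<^sup>2) / t)"
        by (simp add: algebra_simps)
      hence "2 * (a1 z * b1 z + a2 z * b2 z) \<le> t * ((a1 z)\<^sup>2 + (a2 z)\<^sup>2) + ((b1 z)\<^sup>2 + (b2 z)\<^sup>2) / t" using t by simp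
      thus ?thesis by simp
    qed
    have i1: "(\<lambda>z. t * ((a1 z)\<^sup>2 + (a2 z)\<^sup>2)) integrable_on BX R" "(\<lambda>z. ((b1 z)\<^sup>2 + (b2 z)\<^sup>2) / t) integrable_on BX R"
      using t by (auto intro!: integrable_continuous continuous_intros c')
    have "I \<le> integral (BX R) (\<lambda>z. (t * ((a1 z)\<^sup>2 + (a2 z)\<^sup>2) + ((b1 z)\<^sup>2 + (b2 z)\<^sup>2) / t) / 2)"
      unfolding I_def using t by (intro integral_le integrable_continuous continuous_intros c' pw) auto
    also have "\<dots> = integral (BX R) (\<lambda>z. t * ((a1 z)\<^sup>2 + (a2 z)\<^sup>2) + ((b1 z)\<^sup>2 + (b2 z)\<^sup>2) / t) / 2"
      by (rule integral_divide)
    also have "\<dots> = (integral (BX R) (\<lambda>z. t * ((a1 z)\<^sup>2 + (a2 z)\<^sup>2)) + integral (BX R) (\<lambda>z. ((b1 z)\<^sup>2 + (b2 z)\<^sup>2) / t)) / 2"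
      by (simp add: integral_add[OF i1])
    also have "\<dots> = (t * X + Y / t) / 2"
      unfolding X_def Y_def by (simp add: integral_divide)
    finally show "I \<le> (t * X + Y / t) / 2" .
  qed
  have T: "integral (BX R) (\<lambda>z. (a1 z + b1 z)\<^sup>2 + (a2 z + b2 z)\<^sup>2) = X + 2 * I + Y"
  proof -
    have "(\<lambda>z. (a1 z + b1 z)\<^sup>2 + (a2 z + b2 z)\<^sup>2) =
        (\<lambda>z. ((a1 z)\<^sup>2 + (a2 z)\<^sup>2) + (2 * (a1 z * b1 z + a2 z * b2 z) + ((b1 z)\<^sup>2 + (b2 z)\<^sup>2)))"
      by (simp add: power2_eq_square algebra_simps fun_eq_iff)
    moreover have "integral (BX R) (\<lambda>z. ((a1 z)\<^sup>2 + (a2 z)\<^sup>2) + (2 * (a1 z * b1 z + a2 z * b2 z) + ((b1 z)\<^sup>2 + (b2 z)\<^sup>2)))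
        = X + (2 * I + Y)"
    proof -
      have i2: "(\<lambda>z. 2 * (a1 z * b1 z + a2 z * b2 z)) integrable_on BX R"
        by (intro integrable_continuous continuous_intros c')
      have i3: "(\<lambda>z. 2 * (a1 z * b1 z + a2 z * b2 z) + ((b1 z)\<^sup>2 + (b2 z)\<^sup>2)) integrable_on BX R"
        by (intro integrable_continuous continuous_intros c')
      show ?thesis unfolding X_def Y_def I_def
        by (simp only: integral_add[OF iX i3] integral_add[OF i2 iY] integral_mult_right)
    qed
    ultimately show ?thesis by simp
  qed
  have "X + 2 * I + Y \<le> (sqrt X + sqrt Y)\<^sup>2"
    using IXY X0 Y0 by (simp add: power2_eq_square algebra_simps)
  hence "sqrt (X + 2 * I + Y) \<le> sqrt ((sqrt X + sqrt Y)\<^sup>2)" by (rule real_sqrt_le_mono)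
  also have "\<dots> = sqrt X + sqrt Y" using X0 Y0 by simp
  finally show ?thesis unfolding T X_def Y_def .
qed

lemma supp_in_diff: "supp_in f r \<Longrightarrow> supp_in h r \<Longrightarrow> supp_in (\<lambda>z. f z - h z) r"
  unfolding supp_in_def by (metis diff_self)

lemma Y_repr: assumes "f \<in> Yspace"
  shows "\<exists>g r. g \<in> C0inf \<and> supp_in g r \<and> 0 \<le> r \<and> f = pderivs [True] g"
proof -
  obtain g where g: "g \<in> C0inf" "f = px g" using assms unfolding Yspace_def by blast
  obtain r where r: "supp_in g r" using C0inf_supp[OF g(1)] by blast
  have "supp_in g (max r 0)" using supp_in_mono[OF r] by simp
  thus ?thesis using g by (intro exI[of _ g] exI[of _ "max r 0"]) (auto simp: pderivs.simps)
qed

lemma Y_props: assumes "f \<in> Yspace"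
  shows "integral\<^sup>L lborel (\<lambda>z. (f z) ^ 4) \<le> 4 * sqrt (L2sq f) * Ykin f * sqrt (Ykin f)"
  "integrable lborel (\<lambda>z. (f z) ^ 4)" "integrable lborel (\<lambda>z. (f z)\<^sup>2)"
  "0 \<le> Ykin f" "f \<in> borel_measurable lborel"
proof -
  obtain g r where g: "g \<in> C0inf" "supp_in g r" "0 \<le> r" "f = pderivs [True] g"
    using Y_repr[OF assms] by blast
  have R: "r + 3 \<le> r + 3" by simp
  note Y = Y_core[OF g(1) g(2) R g(3)]
  show "integral\<^sup>L lborel (\<lambda>z. (f z) ^ 4) \<le> 4 * sqrt (L2sq f) * Ykin f * sqrt (Ykin f)"
    "integrable lborel (\<lambda>z. (f z) ^ 4)" "integrable lborel (\<lambda>z. (f z)\<^sup>2)"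
    "0 \<le> Ykin f" "f \<in> borel_measurable lborel"
    using Y unfolding g(4) by auto
qed

lemma Y_diff: assumes "f \<in> Yspace" "h \<in> Yspace" shows "(\<lambda>z. f z - h z) \<in> Yspace"
proof -
  obtain g1 where g1: "g1 \<in> C0inf" "f = px g1" using assms unfolding Yspace_def by blast
  obtain g2 where g2: "g2 \<in> C0inf" "h = px g2" using assms unfolding Yspace_def by blast
  have s: "smooth2 g1" "smooth2 g2" using g1 g2 unfolding C0inf_def by auto
  have "(\<lambda>z. f z - h z) = px (\<lambda>z. g1 z - g2 z)"
    using pderivs_diff[OF s, of "[True]"] g1 g2 by (simp add: pderivs.simps)
  thus ?thesis using C0inf_diff[OF g1(1) g2(1)] unfolding Yspace_def by blast
qed

lemma Y_tri: assumes "f \<in> Yspace" "h \<in> Yspace"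
  shows "\<bar>sqrt (Ykin f) - sqrt (Ykin h)\<bar> \<le> sqrt (Ykin (\<lambda>z. f z - h z))"
proof -
  obtain g1 r1 where g1: "g1 \<in> C0inf" "supp_in g1 r1" "0 \<le> r1" "f = pderivs [True] g1"
    using Y_repr[OF assms(1)] by blast
  obtain g2 r2 where g2: "g2 \<in> C0inf" "supp_in g2 r2" "0 \<le> r2" "h = pderivs [True] g2"
    using Y_repr[OF assms(2)] by blast
  define r where "r = max r1 r2"
  define R where "R = r + 3"
  define d where "d = (\<lambda>z. g1 z - g2 z)"
  have s1: "supp_in g1 r" and s2: "supp_in g2 r" unfolding r_def
    by (rule supp_in_mono[OF g1(2)], simp) (rule supp_in_mono[OF g2(2)], simp)
  have r0: "0 \<le> r" and RR: "r + 3 \<le> R" using g1(3) by (auto simp: r_def R_def)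
  have sm: "smooth2 g1" "smooth2 g2" using g1 g2 unfolding C0inf_def by auto
  have dC: "d \<in> C0inf" unfolding d_def by (rule C0inf_diff[OF g1(1) g2(1)])
  have sd: "supp_in d r" unfolding d_def by (rule supp_in_diff[OF s1 s2])
  have pdd: "pderivs ds d = (\<lambda>z. pderivs ds g1 z - pderivs ds g2 z)" for ds
    unfolding d_def by (rule pderivs_diff[OF sm])
  have fh: "(\<lambda>z. f z - h z) = pderivs [True] d" using pdd g1(4) g2(4) by simp
  have K1: "Ykin f = integral (BX R) (\<lambda>z. (pderivs [True, True] g1 z)\<^sup>2 + (pderivs [False] g1 z)\<^sup>2)"
    using Ykin_box(2)[OF g1(1) s1 RR r0] g1(4) by simp
  have K2: "Ykin h = integral (BX R) (\<lambda>z. (pderivs [True, True] g2 z)\<^sup>2 + (pderivs [False] g2 z)\<^sup>2)"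
    using Ykin_box(2)[OF g2(1) s2 RR r0] g2(4) by simp
  have Kd: "Ykin (\<lambda>z. f z - h z) = integral (BX R) (\<lambda>z. (pderivs [True, True] g1 z - pderivs [True, True] g2 z)\<^sup>2
      + (pderivs [False] g1 z - pderivs [False] g2 z)\<^sup>2)"
    using Ykin_box(2)[OF dC sd RR r0] fh pdd by simp
  have c: "continuous_on UNIV (pderivs ds g1)" "continuous_on UNIV (pderivs ds g2)" for ds
    using smooth2_cont sm by blast+
  have A: "sqrt (Ykin f) \<le> sqrt (Ykin h) + sqrt (Ykin (\<lambda>z. f z - h z))"
    using mink_box[of "pderivs [True, True] g2" "pderivs [False] g2"
        "\<lambda>z. pderivs [True, True] g1 z - pderivs [True, True] g2 z" "\<lambda>z. pderivs [False] g1 z - pderivs [False] g2 z" R]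
    unfolding K1 K2 Kd by (simp add: c continuous_on_diff)
  have B: "sqrt (Ykin h) \<le> sqrt (Ykin f) + sqrt (Ykin (\<lambda>z. f z - h z))"
    using mink_box[of "pderivs [True, True] g1" "pderivs [False] g1"
        "\<lambda>z. pderivs [True, True] g2 z - pderivs [True, True] g1 z" "\<lambda>z. pderivs [False] g2 z - pderivs [False] g1 z" R]
    unfolding K1 K2 Kd by (simp add: c continuous_on_diff power2_commute)
  show ?thesis using A B by linarith
qed

lemma L2sq_nonneg: "0 \<le> L2sq f" unfolding L2sq_def by (rule Bochner_Integration.integral_nonneg) simp

lemma Ykin_conv: assumes "approx_seq u s" shows "(\<lambda>n. Ykin (s n)) \<longlonglongrightarrow> lim (\<lambda>n. Ykin (s n))"
    and "0 \<le> lim (\<lambda>n. Ykin (s n))"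
proof -
  have Y: "\<And>n. s n \<in> Yspace" using assms unfolding approx_seq_def by blast
  have C: "\<And>e. e > 0 \<Longrightarrow> \<exists>N. \<forall>j\<ge>N. \<forall>k\<ge>N. Ynorm2 (\<lambda>z. s j z - s k z) < e"
    using assms unfolding approx_seq_def by blast
  have "Cauchy (\<lambda>n. sqrt (Ykin (s n)))"
  proof (rule CauchyI)
    fix e :: real assume e: "e > 0"
    obtain N where N: "\<forall>j\<ge>N. \<forall>k\<ge>N. Ynorm2 (\<lambda>z. s j z - s k z) < e\<^sup>2" using C[of "e\<^sup>2"] e by auto
    show "\<exists>M. \<forall>m\<ge>M. \<forall>n\<ge>M. norm (sqrt (Ykin (s m)) - sqrt (Ykin (s n))) < e"
    proof (intro exI allI impI)
      fix m n assume mn: "N \<le> m" "N \<le> n"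
      have "norm (sqrt (Ykin (s m)) - sqrt (Ykin (s n))) \<le> sqrt (Ykin (\<lambda>z. s m z - s n z))"
        using Y_tri[OF Y Y] by simp
      also have "\<dots> \<le> sqrt (Ynorm2 (\<lambda>z. s m z - s n z))"
        unfolding Ynorm2_def using L2sq_nonneg by simp
      also have "\<dots> < sqrt (e\<^sup>2)" using N mn by (intro real_sqrt_less_mono) simp
      also have "\<dots> = e" using e by simp
      finally show "norm (sqrt (Ykin (s m)) - sqrt (Ykin (s n))) < e" .
    qed
  qed
  then obtain l where l: "(\<lambda>n. sqrt (Ykin (s n))) \<longlonglongrightarrow> l"
    using Cauchy_convergent_iff convergent_def by blast
  have "(\<lambda>n. (sqrt (Ykin (s n)))\<^sup>2) \<longlonglongrightarrow> l\<^sup>2" by (intro tendsto_intros l)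
  moreover have "(sqrt (Ykin (s n)))\<^sup>2 = Ykin (s n)" for n using Y_props(4)[OF Y] by simp
  ultimately have L: "(\<lambda>n. Ykin (s n)) \<longlonglongrightarrow> l\<^sup>2" by simp
  hence "lim (\<lambda>n. Ykin (s n)) = l\<^sup>2" by (rule limI)
  thus "(\<lambda>n. Ykin (s n)) \<longlonglongrightarrow> lim (\<lambda>n. Ykin (s n))" "0 \<le> lim (\<lambda>n. Ykin (s n))" using L by auto
qed

lemma L2_bound: assumes ap: "approx_seq u s" and La: "L2sq u = a\<^sup>2" and a: "a > 0"
  shows "\<exists>N. \<forall>n\<ge>N. L2sq (s n) \<le> 2 * a\<^sup>2 + 2"
proof -
  have Y: "\<And>n. s n \<in> Yspace" using ap unfolding approx_seq_def by blast
  have AEc: "AE z in lborel. (\<lambda>n. s n z) \<longlonglongrightarrow> u z" using ap unfolding approx_seq_def by blast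
  obtain N where N: "\<forall>j\<ge>N. \<forall>k\<ge>N. Ynorm2 (\<lambda>z. s j z - s k z) < 1"
    using ap unfolding approx_seq_def by (meson zero_less_one)
  have iu: "integrable lborel (\<lambda>z. (u z)\<^sup>2)"
    using La a not_integrable_integral_eq unfolding L2sq_def by fastforce
  have mu: "(\<lambda>z. (u z)\<^sup>2) \<in> borel_measurable lborel" using iu by (rule borel_measurable_integrable)
  have ms: "\<And>n. s n \<in> borel_measurable lborel" using Y_props(5)[OF Y] .
  have "L2sq (s n) \<le> 2 * a\<^sup>2 + 2" if n: "n \<ge> N" for n
  proof -
    define F where "F k z = ennreal ((s n z - s k z)\<^sup>2)" for k z
    have mF: "F k \<in> borel_measurable lborel" for k unfolding F_def using ms by measurable
    have pw: "AE z in lborel. ennreal ((s n z)\<^sup>2) \<le> ennreal (2 * (u z)\<^sup>2) + 2 * liminf (\<lambda>k. F k z)"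
      using AEc
    proof eventually_elim
      case (elim z)
      have "(\<lambda>k. F k z) \<longlonglongrightarrow> ennreal ((s n z - u z)\<^sup>2)"
        unfolding F_def by (intro tendsto_intros elim)
      hence li: "liminf (\<lambda>k. F k z) = ennreal ((s n z - u z)\<^sup>2)" by (intro lim_imp_Liminf) auto
      have "0 \<le> (s n z - 2 * u z)\<^sup>2" by simp
      hence "(s n z)\<^sup>2 \<le> 2 * (u z)\<^sup>2 + 2 * (s n z - u z)\<^sup>2"
        by (simp add: power2_eq_square algebra_simps)
      hence "ennreal ((s n z)\<^sup>2) \<le> ennreal (2 * (u z)\<^sup>2 + 2 * (s n z - u z)\<^sup>2)" by (rule ennreal_leI)
      also have "\<dots> = ennreal (2 * (u z)\<^sup>2) + 2 * ennreal ((s n z - u z)\<^sup>2)"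
        by (simp add: ennreal_mult)
      finally show ?case unfolding li .
    qed
    have "(\<integral>\<^sup>+z. ennreal ((s n z)\<^sup>2) \<partial>lborel) \<le> (\<integral>\<^sup>+z. ennreal (2 * (u z)\<^sup>2) + 2 * liminf (\<lambda>k. F k z) \<partial>lborel)"
      by (rule nn_integral_mono_AE[OF pw])
    also have "\<dots> = (\<integral>\<^sup>+z. ennreal (2 * (u z)\<^sup>2) \<partial>lborel) + 2 * (\<integral>\<^sup>+z. liminf (\<lambda>k. F k z) \<partial>lborel)"
      using mu mF by (subst nn_integral_add) (auto intro!: nn_integral_cmult)
    also have "(\<integral>\<^sup>+z. ennreal (2 * (u z)\<^sup>2) \<partial>lborel) = ennreal (2 * a\<^sup>2)"
    proof -
      have "(\<integral>\<^sup>+z. ennreal (2 * (u z)\<^sup>2) \<partial>lborel) = ennreal (integral\<^sup>L lborel (\<lambda>z. 2 * (u z)\<^sup>2))"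
        using iu by (intro nn_integral_eq_integral) auto
      also have "integral\<^sup>L lborel (\<lambda>z. 2 * (u z)\<^sup>2) = 2 * a\<^sup>2" using La unfolding L2sq_def by simp
      finally show ?thesis .
    qed
    also have "(\<integral>\<^sup>+z. liminf (\<lambda>k. F k z) \<partial>lborel) \<le> liminf (\<lambda>k. \<integral>\<^sup>+z. F k z \<partial>lborel)"
      by (rule nn_integral_liminf[OF mF])
    also have "liminf (\<lambda>k. \<integral>\<^sup>+z. F k z \<partial>lborel) \<le> 1"
    proof (rule Liminf_le)
      show "\<forall>\<^sub>F k in sequentially. (\<integral>\<^sup>+z. F k z \<partial>lborel) \<le> 1"
        unfolding eventually_sequentially
      proof (intro exI allI impI)
        fix k assume k: "N \<le> k"
        have YD: "(\<lambda>z. s n z - s k z) \<in> Yspace" by (rule Y_diff[OF Y Y])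
        have "(\<integral>\<^sup>+z. F k z \<partial>lborel) = ennreal (L2sq (\<lambda>z. s n z - s k z))"
          unfolding F_def L2sq_def using Y_props(3)[OF YD] by (intro nn_integral_eq_integral) auto
        also have "L2sq (\<lambda>z. s n z - s k z) \<le> Ynorm2 (\<lambda>z. s n z - s k z)"
          unfolding Ynorm2_def using Y_props(4)[OF YD] by simp
        hence "L2sq (\<lambda>z. s n z - s k z) \<le> 1" using N n k by force
        hence "ennreal (L2sq (\<lambda>z. s n z - s k z)) \<le> 1" by (simp add: ennreal_leI)
        finally show "(\<integral>\<^sup>+z. F k z \<partial>lborel) \<le> 1" .
      qed
    qed simp
    finally have "(\<integral>\<^sup>+z. ennreal ((s n z)\<^sup>2) \<partial>lborel) \<le> ennreal (2 * a\<^sup>2) + 2 * 1"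
      by (simp add: add_left_mono mult_left_mono)
    also have "\<dots> = ennreal (2 * a\<^sup>2 + 2)" by (simp add: ennreal_plus)
    finally have le: "(\<integral>\<^sup>+z. ennreal ((s n z)\<^sup>2) \<partial>lborel) \<le> ennreal (2 * a\<^sup>2 + 2)" .
    have eq: "(\<integral>\<^sup>+z. ennreal ((s n z)\<^sup>2) \<partial>lborel) = ennreal (L2sq (s n))"
      unfolding L2sq_def using Y_props(3)[OF Y] by (intro nn_integral_eq_integral) auto
    have "ennreal (L2sq (s n)) \<le> ennreal (2 * a\<^sup>2 + 2)" using le unfolding eq .
    thus ?thesis by (subst (asm) ennreal_le_iff) auto
  qed
  thus ?thesis by blast
qed


lemma pw_q: fixes x t q :: real assumes t: "t > 0" and q: "2 < q" "q < 4"
  shows "\<bar>x\<bar> powr q \<le> t powr (q - 2) * x\<^sup>2 + t powr (q - 4) * x ^ 4"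
proof (cases "x = 0")
  case True thus ?thesis using q by simp
next
  case False
  define y where "y = \<bar>x\<bar>"
  have y: "y > 0" using False by (simp add: y_def)
  have e2: "y powr 2 = y\<^sup>2" using y by simp
  have e4: "y powr 4 = y ^ 4" using y by simp
  have x2: "x\<^sup>2 = y powr 2" unfolding e2 y_def by simp
  have x4: "x ^ 4 = y powr 4" unfolding e4 y_def by simp
  have nn: "0 \<le> t powr (q - 2) * x\<^sup>2" "0 \<le> t powr (q - 4) * x ^ 4" by simp_all
  show ?thesis
  proof (cases "y \<le> t")
    case True
    have "\<bar>x\<bar> powr q = y powr ((q - 2) + 2)" unfolding y_def by simp
    also have "\<dots> = y powr (q - 2) * y powr 2" by (rule powr_add)
    also have "\<dots> \<le> t powr (q - 2) * y powr 2"
      using True y q by (intro mult_right_mono powr_mono2) auto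
    finally show ?thesis unfolding x2 using nn(2) by linarith
  next
    case False
    have "\<bar>x\<bar> powr q = y powr ((q - 4) + 4)" unfolding y_def by simp
    also have "\<dots> = y powr (q - 4) * y powr 4" by (rule powr_add)
    also have "\<dots> \<le> t powr (q - 4) * y powr 4"
      using False y q t by (intro mult_right_mono powr_mono2') auto
    finally show ?thesis unfolding x4 using nn(1) by linarith
  qed
qed

lemma u_q_bound:
  fixes q t A K :: real
  assumes ap: "approx_seq u s" and N: "\<forall>n\<ge>N. L2sq (s n) \<le> A" and A: "0 \<le> A"
    and K: "(\<lambda>n. Ykin (s n)) \<longlonglongrightarrow> K" and t: "t > 0" and q: "2 < q" "q < 4"
  shows "integral\<^sup>L lborel (\<lambda>z. \<bar>u z\<bar> powr q) \<le> t powr (q - 2) * A + t powr (q - 4) * (4 * sqrt A * K * sqrt K)"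
proof -
  have Y: "\<And>n. s n \<in> Yspace" using ap unfolding approx_seq_def by blast
  have AEc: "AE z in lborel. (\<lambda>n. s n z) \<longlonglongrightarrow> u z" using ap unfolding approx_seq_def by blast
  have ms: "\<And>n. s n \<in> borel_measurable lborel" using Y_props(5)[OF Y] .
  define \<Psi> where "\<Psi> n = t powr (q - 2) * A + t powr (q - 4) * (4 * sqrt A * Ykin (s n) * sqrt (Ykin (s n)))" for n
  define \<Phi> where "\<Phi> = t powr (q - 2) * A + t powr (q - 4) * (4 * sqrt A * K * sqrt K)"
  have K0: "0 \<le> K"
    using K Y_props(4)[OF Y] by (intro tendsto_lowerbound[OF K]) (auto intro: always_eventually)
  have Phi0: "0 \<le> \<Phi>" unfolding \<Phi>_def using A K0 by simp
  have PsiL: "\<Psi> \<longlonglongrightarrow> \<Phi>" unfolding \<Psi>_def \<Phi>_def by (intro tendsto_intros K)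
  have mF: "(\<lambda>z. ennreal (\<bar>s n z\<bar> powr q)) \<in> borel_measurable lborel" for n using ms by measurable
  have bnd: "(\<integral>\<^sup>+z. ennreal (\<bar>s n z\<bar> powr q) \<partial>lborel) \<le> ennreal (\<Psi> n)" if n: "n \<ge> N" for n
  proof -
    have i2: "integrable lborel (\<lambda>z. (s n z)\<^sup>2)" and i4: "integrable lborel (\<lambda>z. (s n z) ^ 4)"
      using Y_props(2,3)[OF Y] by auto
    have iS: "integrable lborel (\<lambda>z. t powr (q - 2) * (s n z)\<^sup>2 + t powr (q - 4) * (s n z) ^ 4)"
      using i2 i4 by (intro Bochner_Integration.integrable_add Bochner_Integration.integrable_mult_right)
    have "(\<integral>\<^sup>+z. ennreal (\<bar>s n z\<bar> powr q) \<partial>lborel) \<le>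
        (\<integral>\<^sup>+z. ennreal (t powr (q - 2) * (s n z)\<^sup>2 + t powr (q - 4) * (s n z) ^ 4) \<partial>lborel)"
      using pw_q[OF t q] by (intro nn_integral_mono ennreal_leI) auto
    also have "\<dots> = ennreal (integral\<^sup>L lborel (\<lambda>z. t powr (q - 2) * (s n z)\<^sup>2 + t powr (q - 4) * (s n z) ^ 4))"
      using iS by (intro nn_integral_eq_integral) auto
    also have "integral\<^sup>L lborel (\<lambda>z. t powr (q - 2) * (s n z)\<^sup>2 + t powr (q - 4) * (s n z) ^ 4) =
        t powr (q - 2) * L2sq (s n) + t powr (q - 4) * integral\<^sup>L lborel (\<lambda>z. (s n z) ^ 4)"
      unfolding L2sq_def using i2 i4 by simp
    also have "\<dots> \<le> \<Psi> n"
    proof -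
      have "L2sq (s n) \<le> A" using N n by blast
      moreover have "integral\<^sup>L lborel (\<lambda>z. (s n z) ^ 4) \<le> 4 * sqrt A * Ykin (s n) * sqrt (Ykin (s n))"
      proof -
        have "integral\<^sup>L lborel (\<lambda>z. (s n z) ^ 4) \<le> 4 * sqrt (L2sq (s n)) * Ykin (s n) * sqrt (Ykin (s n))"
          by (rule Y_props(1)[OF Y])
        also have "\<dots> \<le> 4 * sqrt A * Ykin (s n) * sqrt (Ykin (s n))"
          using N n Y_props(4)[OF Y] by (intro mult_right_mono) auto
        finally show ?thesis .
      qed
      ultimately show ?thesis unfolding \<Psi>_def by (intro add_mono mult_left_mono) auto
    qed
    finally show ?thesis by (simp add: ennreal_leI)
  qed
  have "(\<integral>\<^sup>+z. ennreal (\<bar>u z\<bar> powr q) \<partial>lborel) = (\<integral>\<^sup>+z. liminf (\<lambda>n. ennreal (\<bar>s n z\<bar> powr q)) \<partial>lborel)"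
  proof (rule nn_integral_cong_AE)
    show "AE z in lborel. ennreal (\<bar>u z\<bar> powr q) = liminf (\<lambda>n. ennreal (\<bar>s n z\<bar> powr q))"
      using AEc
    proof eventually_elim
      case (elim z)
      have "(\<lambda>n. \<bar>s n z\<bar> powr q) \<longlonglongrightarrow> \<bar>u z\<bar> powr q"
        using q by (intro tendsto_powr2 tendsto_intros elim) auto
      hence "(\<lambda>n. ennreal (\<bar>s n z\<bar> powr q)) \<longlonglongrightarrow> ennreal (\<bar>u z\<bar> powr q)" by (rule tendsto_ennrealI)
      thus ?case by (intro lim_imp_Liminf[symmetric]) auto
    qed
  qed
  also have "\<dots> \<le> liminf (\<lambda>n. \<integral>\<^sup>+z. ennreal (\<bar>s n z\<bar> powr q) \<partial>lborel)"
    by (rule nn_integral_liminf[OF mF])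
  also have "\<dots> \<le> liminf (\<lambda>n. ennreal (\<Psi> n))"
    using bnd by (intro Liminf_mono) (auto simp: eventually_sequentially)
  also have "\<dots> = ennreal \<Phi>"
    using PsiL by (intro lim_imp_Liminf tendsto_ennrealI) auto
  finally have le: "(\<integral>\<^sup>+z. ennreal (\<bar>u z\<bar> powr q) \<partial>lborel) \<le> ennreal \<Phi>" .
  show ?thesis
  proof (cases "integrable lborel (\<lambda>z. \<bar>u z\<bar> powr q)")
    case True
    have "integral\<^sup>L lborel (\<lambda>z. \<bar>u z\<bar> powr q) = enn2real (\<integral>\<^sup>+z. ennreal (\<bar>u z\<bar> powr q) \<partial>lborel)"
      using True by (intro integral_eq_nn_integral) auto
    also have "\<dots> \<le> enn2real (ennreal \<Phi>)" using le by (intro enn2real_mono) auto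
    also have "\<dots> = \<Phi>" using Phi0 by simp
    finally show ?thesis unfolding \<Phi>_def .
  next
    case False
    hence "integral\<^sup>L lborel (\<lambda>z. \<bar>u z\<bar> powr q) = 0" by (rule not_integrable_integral_eq)
    thus ?thesis using Phi0 unfolding \<Phi>_def by simp
  qed
qed

lemma key:
  fixes q a :: real
  assumes q: "2 < q" "q < 10 / 3" and a: "0 < a" and u: "u \<in> Ssphere a"
  shows "0 \<le> Xkin u"
    "integral\<^sup>L lborel (\<lambda>z. \<bar>u z\<bar> powr q) \<le>
      ((2 * a\<^sup>2 + 2) + 4 * sqrt (2 * a\<^sup>2 + 2)) * (1 + Xkin u) powr (3 * (q - 2) / 4)"
proof -
  define A where "A = 2 * a\<^sup>2 + 2"
  have A0: "0 \<le> A" unfolding A_def by simp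
  have uX: "u \<in> Xspace" and La: "L2sq u = a\<^sup>2" using u unfolding Ssphere_def by auto
  define s where "s = (SOME s. approx_seq u s)"
  have ap: "approx_seq u s" unfolding s_def using uX unfolding Xspace_def by (metis (mono_tags) mem_Collect_eq someI_ex)
  have XK: "Xkin u = lim (\<lambda>n. Ykin (s n))" unfolding Xkin_def s_def ..
  define K where "K = Xkin u"
  have KL: "(\<lambda>n. Ykin (s n)) \<longlonglongrightarrow> K" and K0: "0 \<le> K"
    using Ykin_conv[OF ap] unfolding K_def XK by auto
  thus "0 \<le> Xkin u" unfolding K_def by simp
  obtain N where N: "\<forall>n\<ge>N. L2sq (s n) \<le> A" using L2_bound[OF ap La a] unfolding A_def by blast
  define t where "t = (1 + K) powr (3 / 4)"
  have K1: "1 \<le> 1 + K" using K0 by simp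
  have t0: "t > 0" unfolding t_def using K0 by simp
  have q4: "q < 4" using q by simp
  have "integral\<^sup>L lborel (\<lambda>z. \<bar>u z\<bar> powr q) \<le> t powr (q - 2) * A + t powr (q - 4) * (4 * sqrt A * K * sqrt K)"
    by (rule u_q_bound[OF ap N A0 KL t0 q(1) q4])
  also have "\<dots> \<le> (A + 4 * sqrt A) * (1 + K) powr (3 * (q - 2) / 4)"
  proof -
    have e1: "t powr (q - 2) = (1 + K) powr (3 * (q - 2) / 4)"
      unfolding t_def using K0 by (simp add: powr_powr)
    have e2: "t powr (q - 4) = (1 + K) powr (3 * (q - 4) / 4)"
      unfolding t_def using K0 by (simp add: powr_powr)
    have "K * sqrt K \<le> (1 + K) * sqrt (1 + K)" using K0 by (intro mult_mono) auto
    also have "\<dots> = (1 + K) powr (3 / 2)"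
    proof -
      have "(1 + K) powr (3 / 2) = (1 + K) powr (1 + 1 / 2)" by simp
      also have "\<dots> = (1 + K) powr 1 * (1 + K) powr (1 / 2)" by (rule powr_add)
      also have "\<dots> = (1 + K) * sqrt (1 + K)" using K0 by (simp add: powr_half_sqrt)
      finally show ?thesis by simp
    qed
    finally have KK: "K * sqrt K \<le> (1 + K) powr (3 / 2)" .
    have "t powr (q - 4) * (4 * sqrt A * K * sqrt K) = 4 * sqrt A * ((1 + K) powr (3 * (q - 4) / 4) * (K * sqrt K))"
      unfolding e2 by (simp add: algebra_simps)
    also have "\<dots> \<le> 4 * sqrt A * ((1 + K) powr (3 * (q - 4) / 4) * (1 + K) powr (3 / 2))"
      using KK A0 by (intro mult_left_mono) auto
    also have "(1 + K) powr (3 * (q - 4) / 4) * (1 + K) powr (3 / 2) = (1 + K) powr (3 * (q - 2) / 4)"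
    proof -
      have "(1 + K) powr (3 * (q - 4) / 4) * (1 + K) powr (3 / 2) = (1 + K) powr (3 * (q - 4) / 4 + 3 / 2)"
        by (rule powr_add[symmetric])
      also have "3 * (q - 4) / 4 + 3 / 2 = 3 * (q - 2) / 4" by (simp add: field_simps)
      finally show ?thesis .
    qed
    finally have "t powr (q - 4) * (4 * sqrt A * K * sqrt K) \<le> 4 * sqrt A * (1 + K) powr (3 * (q - 2) / 4)" .
    thus ?thesis unfolding e1 by (simp add: algebra_simps)
  qed
  finally show "integral\<^sup>L lborel (\<lambda>z. \<bar>u z\<bar> powr q) \<le>
      ((2 * a\<^sup>2 + 2) + 4 * sqrt (2 * a\<^sup>2 + 2)) * (1 + Xkin u) powr (3 * (q - 2) / 4)"
    unfolding A_def K_def .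
qed

lemma young_like:
  fixes c \<theta> :: real
  assumes c: "0 \<le> c" and th: "0 < \<theta>" "\<theta> < 1"
  shows "\<exists>C. \<forall>x\<ge>1. c * x powr \<theta> \<le> x / 4 + C"
proof -
  define M where "M = (4 * c + 1) powr (1 / (1 - \<theta>))"
  have M0: "M > 0" unfolding M_def using c by simp
  have MM: "M powr \<theta> / M = 1 / (4 * c + 1)"
  proof -
    have "M powr \<theta> / M = M powr \<theta> / M powr 1" using M0 by simp
    also have "\<dots> = M powr (\<theta> - 1)" by (rule powr_diff[symmetric])
    also have "\<dots> = (4 * c + 1) powr (1 / (1 - \<theta>) * (\<theta> - 1))" unfolding M_def by (rule powr_powr)
    also have "1 / (1 - \<theta>) * (\<theta> - 1) = -1" using th by (simp add: field_simps)
    finally show ?thesis using c by (simp add: powr_minus_divide)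
  qed
  show ?thesis
  proof (intro exI allI impI)
    fix x :: real assume x: "1 \<le> x"
    define y where "y = x / M"
    have y0: "0 \<le> y" unfolding y_def using x M0 by simp
    have yb: "y powr \<theta> \<le> 1 + y"
    proof (cases "y \<le> 1")
      case True
      hence "y powr \<theta> \<le> 1" using y0 th by (intro powr_le1) auto
      thus ?thesis using y0 by simp
    next
      case False
      hence "y powr \<theta> \<le> y powr 1" using th by (intro powr_mono) auto
      thus ?thesis using False by simp
    qed
    have "x powr \<theta> = (M * y) powr \<theta>" unfolding y_def using M0 by simp
    also have "\<dots> = M powr \<theta> * y powr \<theta>" using M0 y0 by (simp add: powr_mult)
    also have "\<dots> \<le> M powr \<theta> * (1 + y)" using yb by (intro mult_left_mono) auto
    also have "\<dots> = M powr \<theta> + x * (M powr \<theta> / M)" unfolding y_def by (simp add: algebra_simps)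
    also have "\<dots> = M powr \<theta> + x / (4 * c + 1)" unfolding MM by simp
    finally have "c * x powr \<theta> \<le> c * (M powr \<theta> + x / (4 * c + 1))" using c by (intro mult_left_mono) auto
    also have "\<dots> = c * M powr \<theta> + x * (c / (4 * c + 1))" by (simp add: algebra_simps)
    also have "\<dots> \<le> c * M powr \<theta> + x * (1 / 4)"
      using x c by (intro add_left_mono mult_left_mono) (auto simp: field_simps)
    finally show "c * x powr \<theta> \<le> x / 4 + c * M powr \<theta>" by simp
  qed
qed

theorem lemma3p1:
  fixes q a :: real
  assumes "2 < q" and "q < 10 / 3" and "0 < a"
  shows "(\<exists>C. \<forall>u\<in>Ssphere a. C \<le> Jfun q u) \<and>
         (\<forall>M. \<exists>R. \<forall>u\<in>Ssphere a. R \<le> Xnorm u \<longrightarrow> M \<le> Jfun q u)"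
proof -
  define E where "E = (2 * a\<^sup>2 + 2) + 4 * sqrt (2 * a\<^sup>2 + 2)"
  define \<theta> where "\<theta> = 3 * (q - 2) / 4"
  have E0: "0 \<le> E" unfolding E_def by simp
  have q0: "0 < q" using assms by simp
  have th: "0 < \<theta>" "\<theta> < 1" unfolding \<theta>_def using assms by simp_all
  obtain C where C: "\<And>x. 1 \<le> x \<Longrightarrow> (E / q) * x powr \<theta> \<le> x / 4 + C"
    using young_like[OF _ th, of "E / q"] E0 q0 by auto
  have low: "Xkin u / 4 - 1 / 4 - C \<le> Jfun q u" and K0: "0 \<le> Xkin u" if u: "u \<in> Ssphere a" for u
  proof -
    note k = key[OF assms(1,2,3) u]
    show "0 \<le> Xkin u" by (rule k(1))
    have "(1 / q) * integral\<^sup>L lborel (\<lambda>z. \<bar>u z\<bar> powr q) \<le> (1 / q) * (E * (1 + Xkin u) powr \<theta>)"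
      using k(2) q0 unfolding E_def \<theta>_def by (intro mult_left_mono) auto
    also have "\<dots> = (E / q) * (1 + Xkin u) powr \<theta>" by simp
    also have "\<dots> \<le> (1 + Xkin u) / 4 + C" using C k(1) by simp
    finally show "Xkin u / 4 - 1 / 4 - C \<le> Jfun q u" unfolding Jfun_def by (simp add: field_simps)
  qed
  show ?thesis
  proof (intro conjI allI)
    show "\<exists>C'. \<forall>u\<in>Ssphere a. C' \<le> Jfun q u"
    proof (intro exI ballI)
      fix u assume u: "u \<in> Ssphere a"
      show "- 1 / 4 - C \<le> Jfun q u" using low[OF u] K0[OF u] by simp
    qed
    fix M :: real
    show "\<exists>R. \<forall>u\<in>Ssphere a. R \<le> Xnorm u \<longrightarrow> M \<le> Jfun q u"
    proof (intro exI ballI impI)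
      fix u assume u: "u \<in> Ssphere a" and R: "sqrt (a\<^sup>2 + 4 * \<bar>M + 1 / 4 + C\<bar>) \<le> Xnorm u"
      have La: "L2sq u = a\<^sup>2" using u unfolding Ssphere_def by auto
      have "sqrt (a\<^sup>2 + 4 * \<bar>M + 1 / 4 + C\<bar>) \<le> sqrt (Xkin u + a\<^sup>2)" using R unfolding Xnorm_def La .
      hence "a\<^sup>2 + 4 * \<bar>M + 1 / 4 + C\<bar> \<le> Xkin u + a\<^sup>2"
        using K0[OF u] by (subst (asm) real_sqrt_le_iff) 
      hence "4 * \<bar>M + 1 / 4 + C\<bar> \<le> Xkin u" by simp
      thus "M \<le> Jfun q u" using low[OF u] abs_ge_self[of "M + 1 / 4 + C"] by argo
    qed
  qed
qed

end
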